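(* Let $\alpha,\beta,u_1,u_2,u_3,u_4$ be indeterminates and let $x,y$ be any two elements (in an algebraic closure of $\mathbb{Q}(\alpha,\beta,u_1,\dots,u_4)$) with $x+y=u_3+u_4$ and $xy=u_1u_2$. Then, as formal power series in $t$, $$\sum_{n\geq 0}P_n(u_1,u_2,u_3,u_4\mid\alpha,\beta)\frac{t^n}{n!}=\bigl(1+yF(x,y;t)\bigr)^{\frac{\alpha+\beta}{2}}\bigl(1+xF(x,y;t)\bigr)^{\frac{\alpha+\beta}{2}}\,e^{\frac12(\beta-\alpha)(u_3-u_4)t}.$$
   Context: For $\sigma=\sigma_1\cdots\sigma_m\in\mathfrak S_m$ (permutations of $[m]$): ${\rm LRmax}(\sigma)$ is the number of $i$ with $\sigma_j<\sigma_i$ for all $j<i$; ${\rm RLmax}(\sigma)$ is the number of $i$ with $\sigma_j<\sigma_i$ for all $j>i$. With the convention $\sigma_0=\sigma_{m+1}=0$: ${\rm W}(\sigma)$ (exterior peaks) is the number of $i\in[m]$ with $\sigma_{i-1}<\sigma_i>\sigma_{i+1}$; ${\rm V}(\sigma)$ (valleys) is the number of $i$ with $1<i<m$ and $\sigma_{i-1}>\sigma_i<\sigma_{i+1}$; ${\rm rdd}(\sigma)$ (right double descents) is the number of $i$ with $1<i\le m$ and $\sigma_{i-1}>\sigma_i>\sigma_{i+1}$ (using $\sigma_{m+1}=0$); ${\rm lda}(\sigma)$ (left double ascents) is the number of $i$ with $1\le i<m$ and $\sigma_{i-1}<\sigma_i<\sigma_{i+1}$ (using $\sigma_0=0$). Define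 $$P_n(u_1,u_2,u_3,u_4\mid\alpha,\beta)=\sum_{\sigma\in\mathfrak S_{n+1}}u_1^{{\rm V}(\sigma)}u_2^{{\rm W}(\sigma)-1}u_3^{{\rm rdd}(\sigma)}u_4^{{\rm lda}(\sigma)}\alpha^{{\rm LRmax}(\sigma)-1}\beta^{{\rm RLmax}(\sigma)-1}.$$ Let $F(x,y;t)=\dfrac{e^{xt}-e^{yt}}{xe^{yt}-ye^{xt}}$, a formal power series in $t$ with zero constant term; for a power series $G$ with constant term $1$ and any exponent $c$, $G^c:=\exp(c\log G)$. The right-hand side is symmetric in $x,y$. *)

theory Defs
  imports "HOL-Computational_Algebra.Formal_Power_Series" "HOL-Combinatorics.Multiset_Permutations"
begin

text \<open>A permutation sigma of [m] is a list of length m (a permutation of {1..m});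
  ext_perm s i is sigma_i (1-indexed) with sigma_0 = sigma_(m+1) = 0.\<close>
definition ext_perm :: "nat list \<Rightarrow> nat \<Rightarrow> nat" where
  "ext_perm s i = (if 1 \<le> i \<and> i \<le> length s then s ! (i - 1) else 0)"

definition LRmax :: "nat list \<Rightarrow> nat" where
  "LRmax s = card {i \<in> {1..length s}. \<forall>j. 1 \<le> j \<and> j < i \<longrightarrow> ext_perm s j < ext_perm s i}"

definition RLmax :: "nat list \<Rightarrow> nat" where
  "RLmax s = card {i \<in> {1..length s}. \<forall>j. i < j \<and> j \<le> length s \<longrightarrow> ext_perm s j < ext_perm s i}"

definition ext_peaks :: "nat list \<Rightarrow> nat" where
  "ext_peaks s = card {i \<in> {1..length s}.
     ext_perm s (i - 1) < ext_perm s i \<and> ext_perm s i > ext_perm s (i + 1)}"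

definition valleys :: "nat list \<Rightarrow> nat" where
  "valleys s = card {i. 1 < i \<and> i < length s \<and>
     ext_perm s (i - 1) > ext_perm s i \<and> ext_perm s i < ext_perm s (i + 1)}"

definition rdd :: "nat list \<Rightarrow> nat" where
  "rdd s = card {i. 1 < i \<and> i \<le> length s \<and>
     ext_perm s (i - 1) > ext_perm s i \<and> ext_perm s i > ext_perm s (i + 1)}"

definition lda :: "nat list \<Rightarrow> nat" where
  "lda s = card {i. 1 \<le> i \<and> i < length s \<and>
     ext_perm s (i - 1) < ext_perm s i \<and> ext_perm s i < ext_perm s (i + 1)}"

definition P_poly :: "nat \<Rightarrow> 'a::comm_ring_1 \<Rightarrow> 'a \<Rightarrow> 'a \<Rightarrow> 'a \<Rightarrow> 'a \<Rightarrow> 'a \<Rightarrow> 'a" where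
  "P_poly n u1 u2 u3 u4 \<alpha> \<beta> =
     (\<Sum>s\<in>permutations_of_set {1..n+1}.
        u1 ^ valleys s * u2 ^ (ext_peaks s - 1) * u3 ^ rdd s * u4 ^ lda s *
        \<alpha> ^ (LRmax s - 1) * \<beta> ^ (RLmax s - 1))"

definition F_fps :: "'a::field_char_0 \<Rightarrow> 'a \<Rightarrow> 'a fps" where
  "F_fps x y = (fps_exp x - fps_exp y) / (fps_const x * fps_exp y - fps_const y * fps_exp x)"

text \<open>G^c := exp(c log G) for G with constant term 1; log G = ln(1 + (G - 1)).\<close>
definition fps_powr :: "'a::field_char_0 fps \<Rightarrow> 'a \<Rightarrow> 'a fps" where
  "fps_powr G c = fps_exp c oo (fps_ln 1 oo (G - 1))"

end

theory Submission
  imports Defs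
begin

unbundle fps_syntax



lemma ode_unique:
  fixes X Y :: "'a::field_char_0 fps"
  assumes dX: "fps_deriv X = \<Phi> X" and dY: "fps_deriv Y = \<Phi> Y" and z: "X $ 0 = Y $ 0"
    and causal: "\<And>X Y n. (\<And>m. m \<le> n \<Longrightarrow> X $ m = Y $ m) \<Longrightarrow> \<Phi> X $ n = \<Phi> Y $ n"
  shows "X = Y"
proof -
  have "\<forall>m\<le>n. X $ m = Y $ m" for n
  proof (induction n)
    case 0 then show ?case using z by simp
  next
    case (Suc n)
    have "\<Phi> X $ n = \<Phi> Y $ n" using Suc causal by blast
    hence "fps_deriv X $ n = fps_deriv Y $ n" using dX dY by simp
    hence "of_nat (n+1) * X $ (n+1) = of_nat (n+1) * (Y $ (n+1) :: 'a)" by simp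
    hence "X $ (Suc n) = Y $ (Suc n)" by (simp del: of_nat_Suc)
    then show ?case using Suc by (auto simp: le_Suc_eq)
  qed
  then show ?thesis by (auto simp: fps_eq_iff)
qed

lemma causal_mult:
  assumes "\<And>m. m \<le> n \<Longrightarrow> X $ m = Y $ m"
  shows "(X * c) $ n = (Y * c) $ n" "(c * X) $ n = (c * Y) $ n"
  using assms by (auto simp: fps_mult_nth intro!: sum.cong)

lemma causal_sq:
  assumes "\<And>m. m \<le> n \<Longrightarrow> X $ m = Y $ m"
  shows "(X^2) $ n = (Y^2) $ n"
  using assms by (auto simp: fps_mult_nth power2_eq_square intro!: sum.cong)

lemma powr_deriv:
  fixes G :: "'a::field_char_0 fps"
  assumes G0: "G $ 0 = 1"
  shows "fps_deriv (fps_powr G c) = fps_const c * fps_powr G c * inverse G * fps_deriv G"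
proof -
  define L where "L = fps_ln 1 oo (G - 1)"
  have G1: "(G - 1) $ 0 = 0" using G0 by simp
  have L0: "L $ 0 = 0" by (simp add: L_def)
  have "fps_deriv L = (fps_deriv (fps_ln 1) oo (G - 1)) * fps_deriv G"
    unfolding L_def using fps_compose_deriv[OF G1] by simp
  also have "fps_deriv (fps_ln 1) oo (G - 1) = inverse (1 + fps_X) oo (G - 1)"
    by (simp add: fps_ln_deriv)
  also have "\<dots> = inverse ((1 + fps_X) oo (G - 1))"
    by (rule fps_inverse_compose[OF G1]) simp
  also have "(1 + fps_X) oo (G - 1) = G"
    using G1 by (simp add: fps_compose_add_distrib)
  finally have dL: "fps_deriv L = inverse G * fps_deriv G" .
  have PL: "fps_powr G c = fps_exp c oo L" by (simp add: fps_powr_def L_def)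
  have "fps_deriv (fps_powr G c) = fps_deriv (fps_exp c oo L)" by (simp add: PL)
  also have "\<dots> = (fps_deriv (fps_exp c) oo L) * fps_deriv L"
    by (rule fps_compose_deriv[OF L0])
  also have "fps_deriv (fps_exp c) oo L = fps_const c * (fps_exp c oo L)"
    by (simp add: fps_const_mult_apply_left)
  finally show ?thesis unfolding PL dL by (simp add: mult.assoc)
qed

lemma powr_0: "G $ 0 = 1 \<Longrightarrow> fps_powr G c $ 0 = 1"
  by (simp add: fps_powr_def)




lemma ring_id1:
  fixes a b ex ey :: "'b::comm_ring"
  shows "(a*ex - b*ey)*(a*ey - b*ex) - (ex - ey)*(a*(b*ey) - b*(a*ex)) =
     (a*ey - b*ex + a*(ex - ey))*(a*ey - b*ex + b*(ex-ey))"
  by (simp add: algebra_simps)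

lemma F_ode:
  fixes x y :: "'a::field_char_0"
  assumes xy: "x \<noteq> y"
  shows "fps_deriv (F_fps x y) = (1 + fps_const x * F_fps x y) * (1 + fps_const y * F_fps x y)"
proof -
  define N where "N = fps_exp x - (fps_exp y :: 'a fps)"
  define D where "D = fps_const x * fps_exp y - fps_const y * (fps_exp x :: 'a fps)"
  define I where "I = inverse D"
  have D0: "D $ 0 \<noteq> 0" using xy by (simp add: D_def)
  have DI: "D * I = 1" unfolding I_def using D0 by (rule inverse_mult_eq_1')
  have F: "F_fps x y = N * I" unfolding F_fps_def N_def D_def I_def
    using D0 by (simp add: fps_divide_unit D_def)
  have dI: "fps_deriv I = - fps_deriv D * I^2" unfolding I_def by (rule fps_inverse_deriv[OF D0])
  have dN: "fps_deriv N = fps_const x * fps_exp x - fps_const y * fps_exp y" by (simp add: N_def)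
  have dD: "fps_deriv D = fps_const x * (fps_const y * fps_exp y) - fps_const y * (fps_const x * fps_exp x)"
    by (simp add: D_def)
  have key: "fps_deriv N * D - N * fps_deriv D = (D + fps_const x * N) * (D + fps_const y * N)"
    unfolding dN dD unfolding N_def D_def by (rule ring_id1)
  have "D^2 * fps_deriv (F_fps x y) = fps_deriv N * D * (D * I) - N * fps_deriv D * (D*I)^2"
    unfolding F by (simp add: dI algebra_simps power2_eq_square)
  also have "\<dots> = (D + fps_const x * N) * (D + fps_const y * N)" using key by (simp add: DI)
  also have "\<dots> = D^2 * ((1 + fps_const x * F_fps x y) * (1 + fps_const y * F_fps x y))"
  proof -
    have "D^2 * ((1 + fps_const x * F_fps x y) * (1 + fps_const y * F_fps x y)) =
      (D + fps_const x * N * (D*I)) * (D + fps_const y * N * (D*I))"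
      unfolding F by (simp add: algebra_simps power2_eq_square)
    then show ?thesis by (simp add: DI)
  qed
  finally have E: "D^2 * fps_deriv (F_fps x y) = D^2 * ((1 + fps_const x * F_fps x y) * (1 + fps_const y * F_fps x y))" .
  have II: "I^2 * D^2 = 1" using DI by (simp add: power2_eq_square algebra_simps)
  have "fps_deriv (F_fps x y) = (I^2 * D^2) * fps_deriv (F_fps x y)" by (simp add: II)
  also have "\<dots> = I^2 * (D^2 * fps_deriv (F_fps x y))" by (simp add: mult.assoc)
  also have "\<dots> = (I^2 * D^2) * ((1 + fps_const x * F_fps x y) * (1 + fps_const y * F_fps x y))"
    by (simp add: E mult.assoc)
  finally show ?thesis by (simp add: II)
qed

lemma F_0: "F_fps x y $ 0 = (0::'a::field_char_0)"
proof (cases "x = y")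
  case True then show ?thesis by (simp add: F_fps_def)
next
  case False
  have D0: "(fps_const x * fps_exp y - fps_const y * (fps_exp x :: 'a fps)) $ 0 \<noteq> 0" using False by simp
  show ?thesis unfolding F_fps_def using D0 by (simp add: fps_divide_unit)
qed




lemma powr_deriv2:
  fixes G :: "'a::field_char_0 fps"
  assumes G0: "G $ 0 = 1" and dG: "fps_deriv G = G * H"
  shows "fps_deriv (fps_powr G c) = fps_powr G c * (fps_const c * H)"
proof -
  have iG: "inverse G * G = 1" using G0 by (intro inverse_mult_eq_1) simp
  have "fps_deriv (fps_powr G c) = fps_const c * fps_powr G c * inverse G * (G * H)"
    using powr_deriv[OF G0, of c] dG by simp
  also have "\<dots> = fps_powr G c * (fps_const c * H) * (inverse G * G)" by (simp only: ac_simps)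
  finally show ?thesis by (simp add: iG)
qed

lemma ringA:
  fixes X Y U1 U2 U3 U4 F :: "'b::comm_ring_1"
  assumes "X+Y = U3+U4" "X*Y = U1*U2"
  shows "U1*((1+X*F)*(1+Y*F)) = U1 + (U3+U4)*(U1*F) + U2*(U1*F)^2"
proof -
  have e: "U1*((1+X*F)*(1+Y*F)) = U1 + (X+Y)*(U1*F) + (X*Y)*(U1*F^2)"
    by (simp add: algebra_simps power2_eq_square)
  show ?thesis unfolding e assms by (simp add: algebra_simps power2_eq_square)
qed

lemmas fcs = fps_const_add fps_const_mult fps_const_neg fps_const_sub fps_const_power

lemma analytic_main:
  fixes \<alpha> \<beta> u1 u2 u3 u4 x y :: "'a::field_char_0"
  assumes s: "x + y = u3 + u4" and p: "x * y = u1 * u2" and xy: "x \<noteq> y"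
  and hA: "fps_deriv A = A * (fps_const \<alpha> * (fps_const u4 + fps_const u2 * Gt))" "A $ 0 = 1"
  and hB: "fps_deriv B = B * (fps_const \<beta> * (fps_const u3 + fps_const u2 * Gt))" "B $ 0 = 1"
  and hG: "fps_deriv Gt = fps_const u1 + (fps_const u3 + fps_const u4) * Gt + fps_const u2 * Gt^2" "Gt $ 0 = 0"
  shows "A * B =
    fps_powr (1 + fps_const y * F_fps x y) ((\<alpha> + \<beta>) / 2) *
    fps_powr (1 + fps_const x * F_fps x y) ((\<alpha> + \<beta>) / 2) *
    fps_exp ((\<beta> - \<alpha>) * (u3 - u4) / 2)"
proof -
  define F where "F = F_fps x y"
  define \<gamma> where "\<gamma> = (\<alpha> + \<beta>) / 2"
  define \<delta> where "\<delta> = (\<beta> - \<alpha>) * (u3 - u4) / 2"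
  have dF: "fps_deriv F = (1 + fps_const x * F) * (1 + fps_const y * F)"
    unfolding F_def by (rule F_ode[OF xy])
  have F0: "F $ 0 = 0" unfolding F_def by (rule F_0)
  define \<Phi> where "\<Phi> = (\<lambda>Z::'a fps. fps_const u1 + (fps_const u3 + fps_const u4) * Z + fps_const u2 * Z^2)"
  have s': "fps_const x + fps_const y = fps_const u3 + (fps_const u4 :: 'a fps)"
    using s by simp
  have p': "fps_const x * fps_const y = fps_const u1 * (fps_const u2 :: 'a fps)"
    using p by simp
  have GtF: "Gt = fps_const u1 * F"
  proof (rule ode_unique[where \<Phi> = \<Phi>])
    show "fps_deriv Gt = \<Phi> Gt" using hG by (simp add: \<Phi>_def)
    have "fps_deriv (fps_const u1 * F) = fps_const u1 * ((1 + fps_const x * F) * (1 + fps_const y * F))"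
      by (simp add: dF)
    also have "\<dots> = \<Phi> (fps_const u1 * F)" unfolding \<Phi>_def by (rule ringA[OF s' p'])
    finally show "fps_deriv (fps_const u1 * F) = \<Phi> (fps_const u1 * F)" .
    show "Gt $ 0 = (fps_const u1 * F) $ 0" using hG F0 by simp
    fix X Y :: "'a fps" and n assume "\<And>m. m \<le> n \<Longrightarrow> X $ m = Y $ m"
    then show "\<Phi> X $ n = \<Phi> Y $ n" unfolding \<Phi>_def
      using causal_mult[of n X Y] causal_sq[of n X Y] by simp
  qed
  define Ca where "Ca = (fps_const \<alpha> :: 'a fps)"
  define Cb where "Cb = (fps_const \<beta> :: 'a fps)"
  define U1 where "U1 = (fps_const u1 :: 'a fps)"
  define U2 where "U2 = (fps_const u2 :: 'a fps)"
  define U3 where "U3 = (fps_const u3 :: 'a fps)"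
  define U4 where "U4 = (fps_const u4 :: 'a fps)"
  define X where "X = (fps_const x :: 'a fps)"
  define Y where "Y = (fps_const y :: 'a fps)"
  define Cg where "Cg = (fps_const \<gamma> :: 'a fps)"
  define Cd where "Cd = (fps_const \<delta> :: 'a fps)"
  define c where "c = Ca*U4 + Cb*U3 + (Ca+Cb)*U2*U1*F"
  have dAB: "fps_deriv (A*B) = (A*B) * c"
    unfolding c_def fps_deriv_mult hA(1) hB(1) GtF Ca_def[symmetric] Cb_def[symmetric]
      U1_def[symmetric] U2_def[symmetric] U3_def[symmetric] U4_def[symmetric]
    by (simp add: algebra_simps del: fcs)
  define P1 where "P1 = fps_powr (1 + fps_const y * F) \<gamma>"
  define P2 where "P2 = fps_powr (1 + fps_const x * F) \<gamma>"
  have dP1: "fps_deriv P1 = P1 * (Cg * (Y * (1 + X * F)))"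
    unfolding P1_def Cg_def X_def Y_def
  proof (rule powr_deriv2)
    show "(1 + fps_const y * F) $ 0 = 1" using F0 by simp
    show "fps_deriv (1 + fps_const y * F) = (1 + fps_const y * F) * (fps_const y * (1 + fps_const x * F))"
      by (simp add: dF algebra_simps del: fcs)
  qed
  have dP2: "fps_deriv P2 = P2 * (Cg * (X * (1 + Y * F)))"
    unfolding P2_def Cg_def X_def Y_def
  proof (rule powr_deriv2)
    show "(1 + fps_const x * F) $ 0 = 1" using F0 by simp
    show "fps_deriv (1 + fps_const x * F) = (1 + fps_const x * F) * (fps_const x * (1 + fps_const y * F))"
      by (simp add: dF algebra_simps del: fcs)
  qed
  have e1: "\<alpha>*u4 + \<beta>*u3 = \<gamma> * y + \<gamma> * x + \<delta>"
  proof -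
    have y': "y = u3 + u4 - x" using s by (simp add: algebra_simps)
    show ?thesis unfolding \<gamma>_def \<delta>_def y' by (simp add: field_simps)
  qed
  have e2: "(\<alpha>+\<beta>)*u2*u1 = \<gamma>*y*x + \<gamma>*x*y"
  proof -
    have "\<gamma>*y*x + \<gamma>*x*y = (\<alpha>+\<beta>)*(x*y)" by (simp add: \<gamma>_def field_simps)
    then show ?thesis using p by (simp add: algebra_simps)
  qed
  have E1: "Ca*U4 + Cb*U3 = Cg * Y + Cg * X + Cd"
    unfolding Ca_def Cb_def U3_def U4_def Cg_def Y_def X_def Cd_def
    by (simp only: fcs e1)
  have E2: "(Ca+Cb)*U2*U1 = Cg*Y*X + Cg*X*Y"
    unfolding Ca_def Cb_def U1_def U2_def Cg_def Y_def X_def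
    by (simp only: fcs e2)
  have cc: "c = Cg * (Y * (1 + X * F)) + Cg * (X * (1 + Y * F)) + Cd"
    unfolding c_def E1 E2 by (simp add: algebra_simps del: fcs)
  have dE: "fps_deriv (fps_exp \<delta>) = fps_exp \<delta> * Cd" by (simp add: Cd_def mult.commute)
  have dR: "fps_deriv (P1 * P2 * fps_exp \<delta>) = (P1 * P2 * fps_exp \<delta>) * c"
    unfolding cc fps_deriv_mult dP1 dP2 dE by (simp add: algebra_simps del: fcs)
  have "A * B = P1 * P2 * fps_exp \<delta>"
  proof (rule ode_unique[where \<Phi> = "\<lambda>Z. Z * c"])
    show "fps_deriv (A*B) = A*B*c" by (rule dAB)
    show "fps_deriv (P1 * P2 * fps_exp \<delta>) = P1 * P2 * fps_exp \<delta> * c" by (rule dR)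
    show "(A*B) $ 0 = (P1 * P2 * fps_exp \<delta>) $ 0"
      using hA(2) hB(2) by (simp add: P1_def P2_def powr_0 F0)
    fix X Y :: "'a fps" and n assume "\<And>m. m \<le> n \<Longrightarrow> X $ m = Y $ m"
    then show "(X * c) $ n = (Y * c) $ n" by (rule causal_mult)
  qed
  then show ?thesis by (simp add: P1_def P2_def F_def \<gamma>_def \<delta>_def)
qed



definition code :: "bool \<Rightarrow> bool \<Rightarrow> nat" where
  "code lb rb = (if lb then (if rb then 1 else 3) else (if rb then 4 else 2))"

fun tp :: "bool \<Rightarrow> bool \<Rightarrow> nat list \<Rightarrow> nat list" where
  "tp lh rh [] = []"
| "tp lh rh [b] = [code lh rh]"
| "tp lh rh (b # c # s) = code lh (b < c) # tp (c < b) rh (c # s)"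

lemma length_tp[simp]: "length (tp lh rh s) = length s"
  by (induction lh rh s rule: tp.induct) auto

lemma tp_nth:
  "j < length s \<Longrightarrow> tp lh rh s ! j =
     code (if j = 0 then lh else s!j < s!(j-1)) (if Suc j = length s then rh else s!j < s!(Suc j))"
proof (induction lh rh s arbitrary: j rule: tp.induct)
  case (3 lh rh b c s)
  show ?case
  proof (cases j)
    case 0 then show ?thesis by simp
  next
    case (Suc j')
    then have "j' < length (c # s)" using 3 by simp
    from "3.IH"[OF this] show ?thesis using Suc by (cases j') auto
  qed
qed auto

lemma tp_split:
  assumes "\<forall>z\<in>set w1. z < a" "\<forall>z\<in>set w2. z < a"
  shows "tp lh rh (w1 @ [a] @ w2) = tp lh True w1 @ [code (w1 = [] \<and> lh) (w2 = [] \<and> rh)] @ tp True rh w2"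
  using assms
proof (induction w1 arbitrary: lh)
  case Nil
  then show ?case by (cases w2) auto
next
  case (Cons b w1)
  show ?case
  proof (cases w1)
    case Nil
    have "tp False rh ([a] @ w2) = [code False (w2 = [] \<and> rh)] @ tp True rh w2"
      using Cons.IH[of False] Cons.prems Nil by simp
    then show ?thesis using Nil Cons.prems by simp
  next
    case (Cons c s)
    then show ?thesis using Cons.IH[of "c < b"] Cons.prems by simp
  qed
qed

lemma tp_map:
  assumes "\<And>x y. x \<in> set s \<Longrightarrow> y \<in> set s \<Longrightarrow> (f x < f y) = (x < y)"
  shows "tp lh rh (map f s) = tp lh rh s"
  using assms by (induction lh rh s rule: tp.induct) auto

definition wt :: "'a::comm_ring_1 \<Rightarrow> 'a \<Rightarrow> 'a \<Rightarrow> 'a \<Rightarrow> nat list \<Rightarrow> 'a" where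
  "wt u1 u2 u3 u4 l = u1 ^ count_list l 1 * u2 ^ count_list l 2 * u3 ^ count_list l 3 * u4 ^ count_list l 4"

lemma wt_append: "wt u1 u2 u3 u4 (l1 @ l2) = wt u1 u2 u3 u4 l1 * wt u1 u2 u3 u4 l2"
  by (simp add: wt_def count_list_append power_add algebra_simps)

lemma wt_Nil[simp]: "wt u1 u2 u3 u4 [] = 1" by (simp add: wt_def)

lemma wt_code: "wt u1 u2 u3 u4 [code lb rb] = (if lb then (if rb then u1 else u3) else (if rb then u4 else u2))"
  by (simp add: wt_def code_def)



lemma count_list_card: "count_list l k = card {j. j < length l \<and> l ! j = k}"
  by (simp add: count_list_eq_length_filter length_filter_conv_card eq_commute)

lemma ext_perm_facts:
  assumes "j < length s"
  shows "ext_perm s j = (if j = 0 then 0 else s!(j-1))"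
    "ext_perm s (Suc j) = s!j"
    "ext_perm s (Suc (Suc j)) = (if Suc j < length s then s!(Suc j) else 0)"
  using assms by (auto simp: ext_perm_def)

lemma code_eq: "(code lb rb = 1) = (lb \<and> rb)" "(code lb rb = 2) = (\<not>lb \<and> \<not>rb)"
  "(code lb rb = 3) = (lb \<and> \<not>rb)" "(code lb rb = 4) = (\<not>lb \<and> rb)"
  by (auto simp: code_def)

lemma code_eq1': "(code lb rb = Suc 0) = (lb \<and> rb)" by (auto simp: code_def)

lemma tp_nth_ext:
  assumes d: "distinct s" and z: "0 \<notin> set s" and j: "j < length s"
  shows "tp False False s ! j = code (ext_perm s (Suc j) < ext_perm s j) (ext_perm s (Suc j) < ext_perm s (Suc (Suc j)))"
proof -
  have pos: "s!j > 0" using z j by (metis gr0I nth_mem)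
  show ?thesis unfolding tp_nth[OF j] ext_perm_facts[OF j] using pos j
    by auto
qed

lemma card_Suc_image: "A = Suc ` B \<Longrightarrow> card A = card B"
  by (simp add: card_image)

lemma neq_adj:
  assumes d: "distinct s" and z: "0 \<notin> set s" and j: "j < length s"
  shows "ext_perm s j \<noteq> ext_perm s (Suc j)" "ext_perm s (Suc (Suc j)) \<noteq> ext_perm s (Suc j)"
proof -
  have pos: "s!j > 0" using z j by (metis gr0I nth_mem)
  show "ext_perm s j \<noteq> ext_perm s (Suc j)" unfolding ext_perm_facts[OF j]
    using pos d j by (auto simp: nth_eq_iff_index_eq)
  show "ext_perm s (Suc (Suc j)) \<noteq> ext_perm s (Suc j)" unfolding ext_perm_facts[OF j]
    using pos d j by (auto simp: nth_eq_iff_index_eq)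
qed

lemma stats_tp:
  assumes d: "distinct s" and z: "0 \<notin> set s"
  shows "valleys s = count_list (tp False False s) 1"
    "ext_peaks s = count_list (tp False False s) 2"
    "rdd s = count_list (tp False False s) 3"
    "lda s = count_list (tp False False s) 4"
proof -
  let ?E = "ext_perm s"
  have T: "\<And>j. j < length s \<Longrightarrow> tp False False s ! j = code (?E (Suc j) < ?E j) (?E (Suc j) < ?E (Suc (Suc j)))"
    using tp_nth_ext[OF d z] by blast
  have N: "\<And>j. j < length s \<Longrightarrow> ?E j \<noteq> ?E (Suc j) \<and> ?E (Suc (Suc j)) \<noteq> ?E (Suc j)"
    using neq_adj[OF d z] by blast
  have E0: "?E 0 = 0" by (simp add: ext_perm_def)
  have EL: "?E (Suc (length s)) = 0" by (simp add: ext_perm_def)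
  have P: "\<And>j. j < length s \<Longrightarrow> ?E (Suc j) > 0" using z by (auto simp: ext_perm_def) (metis gr0I nth_mem)
  show "valleys s = count_list (tp False False s) 1" unfolding valleys_def count_list_card
  proof (rule card_Suc_image, intro set_eqI iffI)
    fix i assume "i \<in> {i. 1 < i \<and> i < length s \<and> ?E (i - 1) > ?E i \<and> ?E i < ?E (i + 1)}"
    then obtain j where "i = Suc j" "j < length s" "?E j > ?E (Suc j)" "?E (Suc j) < ?E (Suc (Suc j))"
      by (cases i) auto
    then show "i \<in> Suc ` {j. j < length (tp False False s) \<and> tp False False s ! j = 1}"
      using T by (auto simp: code_eq code_eq1' intro!: image_eqI[where x=j])
  next
    fix i assume "i \<in> Suc ` {j. j < length (tp False False s) \<and> tp False False s ! j = 1}"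
    then obtain j where j: "i = Suc j" "j < length s" "?E j > ?E (Suc j)" "?E (Suc j) < ?E (Suc (Suc j))"
      using T by (auto simp: code_eq code_eq1')
    have "j \<noteq> 0" using j E0 by (metis not_less0)
    moreover have "Suc j \<noteq> length s" using j EL by (metis not_less0)
    ultimately show "i \<in> {i. 1 < i \<and> i < length s \<and> ?E (i - 1) > ?E i \<and> ?E i < ?E (i + 1)}"
      using j by auto
  qed
  show "ext_peaks s = count_list (tp False False s) 2" unfolding ext_peaks_def count_list_card
  proof (rule card_Suc_image, intro set_eqI iffI)
    fix i assume "i \<in> {i \<in> {1..length s}. ?E (i - 1) < ?E i \<and> ?E i > ?E (i + 1)}"
    then obtain j where "i = Suc j" "j < length s" "?E j < ?E (Suc j)" "?E (Suc j) > ?E (Suc (Suc j))"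
      by (cases i) auto
    then show "i \<in> Suc ` {j. j < length (tp False False s) \<and> tp False False s ! j = 2}"
      using T by (auto simp: code_eq code_eq1' intro!: image_eqI[where x=j])
  next
    fix i assume "i \<in> Suc ` {j. j < length (tp False False s) \<and> tp False False s ! j = 2}"
    then obtain j where j: "i = Suc j" "j < length s" "\<not> ?E (Suc j) < ?E j" "\<not> ?E (Suc j) < ?E (Suc (Suc j))"
      using T by (auto simp: code_eq code_eq1')
    then have "?E j < ?E (Suc j)" "?E (Suc j) > ?E (Suc (Suc j))" using N[OF j(2)] by auto
    then show "i \<in> {i \<in> {1..length s}. ?E (i - 1) < ?E i \<and> ?E i > ?E (i + 1)}"
      using j by auto
  qed
  show "rdd s = count_list (tp False False s) 3" unfolding rdd_def count_list_card
  proof (rule card_Suc_image, intro set_eqI iffI)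
    fix i assume "i \<in> {i. 1 < i \<and> i \<le> length s \<and> ?E (i - 1) > ?E i \<and> ?E i > ?E (i + 1)}"
    then obtain j where "i = Suc j" "j < length s" "?E j > ?E (Suc j)" "?E (Suc j) > ?E (Suc (Suc j))"
      by (cases i) auto
    then show "i \<in> Suc ` {j. j < length (tp False False s) \<and> tp False False s ! j = 3}"
      using T by (auto simp: code_eq code_eq1' intro!: image_eqI[where x=j])
  next
    fix i assume "i \<in> Suc ` {j. j < length (tp False False s) \<and> tp False False s ! j = 3}"
    then obtain j where j: "i = Suc j" "j < length s" "?E (Suc j) < ?E j" "\<not> ?E (Suc j) < ?E (Suc (Suc j))"
      using T by (auto simp: code_eq code_eq1')
    then have j2: "?E (Suc j) > ?E (Suc (Suc j))" using N[OF j(2)] by auto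
    have "j \<noteq> 0" using j E0 by (metis not_less0)
    then show "i \<in> {i. 1 < i \<and> i \<le> length s \<and> ?E (i - 1) > ?E i \<and> ?E i > ?E (i + 1)}"
      using j j2 by auto
  qed
  show "lda s = count_list (tp False False s) 4" unfolding lda_def count_list_card
  proof (rule card_Suc_image, intro set_eqI iffI)
    fix i assume "i \<in> {i. 1 \<le> i \<and> i < length s \<and> ?E (i - 1) < ?E i \<and> ?E i < ?E (i + 1)}"
    then obtain j where "i = Suc j" "j < length s" "?E j < ?E (Suc j)" "?E (Suc j) < ?E (Suc (Suc j))"
      by (cases i) auto
    then show "i \<in> Suc ` {j. j < length (tp False False s) \<and> tp False False s ! j = 4}"
      using T by (auto simp: code_eq code_eq1' intro!: image_eqI[where x=j])
  next
    fix i assume "i \<in> Suc ` {j. j < length (tp False False s) \<and> tp False False s ! j = 4}"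
    then obtain j where j: "i = Suc j" "j < length s" "\<not> ?E (Suc j) < ?E j" "?E (Suc j) < ?E (Suc (Suc j))"
      using T by (auto simp: code_eq code_eq1')
    then have j2: "?E j < ?E (Suc j)" using N[OF j(2)] by auto
    have "Suc j \<noteq> length s" using j EL by (metis not_less0)
    then show "i \<in> {i. 1 \<le> i \<and> i < length s \<and> ?E (i - 1) < ?E i \<and> ?E i < ?E (i + 1)}"
      using j j2 by auto
  qed
qed



lemma ext_in: "1 \<le> j \<Longrightarrow> j \<le> length s \<Longrightarrow> ext_perm s j = s ! (j - 1)"
  by (simp add: ext_perm_def)

lemma ext_in_set: "1 \<le> j \<Longrightarrow> j \<le> length s \<Longrightarrow> ext_perm s j \<in> set s"
  by (simp add: ext_perm_def)

lemma ext_app1: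
  "1 \<le> j \<Longrightarrow> j \<le> length w1 \<Longrightarrow> ext_perm (w1 @ a # w2) j = ext_perm w1 j"
  by (auto simp add: ext_perm_def nth_append)

lemma ext_appM: "ext_perm (w1 @ a # w2) (Suc (length w1)) = a"
  by (simp add: ext_perm_def nth_append)

lemma ext_app2:
  "Suc (length w1) < j \<Longrightarrow> ext_perm (w1 @ a # w2) j = ext_perm w2 (j - Suc (length w1))"
  by (auto simp add: ext_perm_def nth_append)

lemma ext_app2':
  "0 < j \<Longrightarrow> ext_perm (w1 @ a # w2) (Suc (j + length w1)) = ext_perm w2 j"
  by (subst ext_app2) auto

lemma LR_split:
  assumes A: "\<forall>z\<in>set w1. z < a" "\<forall>z\<in>set w2. z < a"
  shows "LRmax (w1 @ [a] @ w2) = Suc (LRmax w1)"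
proof -
  let ?s = "w1 @ [a] @ w2" and ?k = "length w1"
  let ?E = "ext_perm ?s" and ?e = "ext_perm w1"
  have "{i \<in> {1..length ?s}. \<forall>j. 1 \<le> j \<and> j < i \<longrightarrow> ?E j < ?E i} =
        insert (Suc ?k) {i \<in> {1..?k}. \<forall>j. 1 \<le> j \<and> j < i \<longrightarrow> ?e j < ?e i}" (is "?L = ?R")
  proof (intro set_eqI iffI)
    fix i assume i: "i \<in> ?L"
    show "i \<in> ?R"
    proof (cases "i \<le> ?k")
      case True
      then show ?thesis using i by (auto simp: ext_app1)
    next
      case False
      have "\<not> Suc ?k < i"
      proof
        assume "Suc ?k < i"
        then have "?E (Suc ?k) < ?E i" using i by auto
        moreover have "?E i \<in> set w2" using \<open>Suc ?k < i\<close> i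
          by (auto simp: ext_app2 intro!: ext_in_set)
        ultimately show False using A by (auto simp: ext_appM)
      qed
      then show ?thesis using False by auto
    qed
  next
    fix i assume i: "i \<in> ?R"
    show "i \<in> ?L"
    proof (cases "i = Suc ?k")
      case True
      have "?E j < ?E i" if "1 \<le> j" "j < i" for j
      proof -
        have "?E j = ?e j" using that True by (simp add: ext_app1)
        moreover have "?e j \<in> set w1" using that True by (intro ext_in_set) auto
        ultimately show ?thesis using A True by (auto simp: ext_appM)
      qed
      then show ?thesis using True by auto
    next
      case False
      then have "i \<le> ?k" "1 \<le> i" "\<forall>j. 1 \<le> j \<and> j < i \<longrightarrow> ?e j < ?e i" using i by auto
      then show ?thesis by (auto simp: ext_app1)
    qed
  qed
  then show ?thesis unfolding LRmax_def by simp
qed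

lemma RL_split:
  assumes A: "\<forall>z\<in>set w1. z < a" "\<forall>z\<in>set w2. z < a"
  shows "RLmax (w1 @ [a] @ w2) = Suc (RLmax w2)"
proof -
  let ?s = "w1 @ [a] @ w2" and ?k = "length w1"
  let ?E = "ext_perm ?s" and ?e = "ext_perm w2"
  have "{i \<in> {1..length ?s}. \<forall>j. i < j \<and> j \<le> length ?s \<longrightarrow> ?E j < ?E i} =
        insert (Suc ?k) ((\<lambda>i. i + Suc ?k) ` {i \<in> {1..length w2}. \<forall>j. i < j \<and> j \<le> length w2 \<longrightarrow> ?e j < ?e i})"
    (is "?L = ?R")
  proof (intro set_eqI iffI)
    fix i assume i: "i \<in> ?L"
    show "i \<in> ?R"
    proof (cases "Suc ?k < i")
      case True
      define i' where "i' = i - Suc ?k"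
      have ii: "i = i' + Suc ?k" using True by (simp add: i'_def)
      have "\<forall>j. i' < j \<and> j \<le> length w2 \<longrightarrow> ?e j < ?e i'"
      proof (intro allI impI)
        fix j assume j: "i' < j \<and> j \<le> length w2"
        have "?E (j + Suc ?k) < ?E i" using i j ii by auto
        then show "?e j < ?e i'" using ii j True by (simp add: ext_app2')
      qed
      moreover have "i' \<in> {1..length w2}" using i True ii by auto
      ultimately show ?thesis using ii by blast
    next
      case False
      have "\<not> i < Suc ?k"
      proof
        assume "i < Suc ?k"
        then have "?E (Suc ?k) < ?E i" using i by auto
        moreover have "?E i \<in> set w1" using \<open>i < Suc ?k\<close> i
          by (auto simp: ext_app1 intro!: ext_in_set)
        ultimately show False using A by (auto simp: ext_appM)
      qed
      then show ?thesis using False by auto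
    qed
  next
    fix i assume i: "i \<in> ?R"
    show "i \<in> ?L"
    proof (cases "i = Suc ?k")
      case True
      have "?E j < ?E i" if "i < j" "j \<le> length ?s" for j
      proof -
        have "?E j = ?e (j - Suc ?k)" using that True by (simp add: ext_app2)
        moreover have "?e (j - Suc ?k) \<in> set w2" using that True by (intro ext_in_set) auto
        ultimately show ?thesis using A True by (auto simp: ext_appM)
      qed
      then show ?thesis using True by auto
    next
      case False
      then obtain i' where ii: "i = i' + Suc ?k" "i' \<in> {1..length w2}"
        "\<forall>j. i' < j \<and> j \<le> length w2 \<longrightarrow> ?e j < ?e i'" using i by auto
      have "?E j < ?E i" if "i < j" "j \<le> length ?s" for j
      proof -
        have "?E j = ?e (j - Suc ?k)" "?E i = ?e i'" using that ii by (simp_all add: ext_app2)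
        moreover have "i' < j - Suc ?k" "j - Suc ?k \<le> length w2" using that ii by auto
        ultimately show ?thesis using ii(3) by auto
      qed
      then show ?thesis using ii by auto
    qed
  qed
  moreover have "Suc ?k \<notin> (\<lambda>i. i + Suc ?k) ` {i \<in> {1..length w2}. \<forall>j. i < j \<and> j \<le> length w2 \<longrightarrow> ?e j < ?e i}"
    by auto
  moreover have "inj (\<lambda>i::nat. i + Suc ?k)" by (simp add: inj_def)
  ultimately show ?thesis unfolding RLmax_def
    by (simp add: card_image inj_on_subset[of _ UNIV])
qed

lemma ext_map: "1 \<le> j \<Longrightarrow> j \<le> length s \<Longrightarrow> ext_perm (map f s) j = f (ext_perm s j)"
  by (simp add: ext_perm_def)

lemma LR_map:
  assumes "\<And>x y. x \<in> set s \<Longrightarrow> y \<in> set s \<Longrightarrow> (f x < f y) = (x < y)"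
  shows "LRmax (map f s) = LRmax s"
proof -
  have "\<And>i j. 1 \<le> j \<Longrightarrow> j < i \<Longrightarrow> i \<le> length s \<Longrightarrow>
      (ext_perm (map f s) j < ext_perm (map f s) i) = (ext_perm s j < ext_perm s i)"
    by (simp add: ext_map assms ext_in_set)
  then show ?thesis unfolding LRmax_def by (intro arg_cong[where f=card] Collect_cong) auto
qed

lemma RL_map:
  assumes "\<And>x y. x \<in> set s \<Longrightarrow> y \<in> set s \<Longrightarrow> (f x < f y) = (x < y)"
  shows "RLmax (map f s) = RLmax s"
proof -
  have "\<And>i j. 1 \<le> i \<Longrightarrow> i < j \<Longrightarrow> j \<le> length s \<Longrightarrow>
      (ext_perm (map f s) j < ext_perm (map f s) i) = (ext_perm s j < ext_perm s i)"
    by (simp add: ext_map assms ext_in_set)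
  then show ?thesis unfolding RLmax_def by (intro arg_cong[where f=card] Collect_cong) auto
qed



lemma perm_decomp:
  fixes h :: "nat list \<Rightarrow> 'a::comm_monoid_add"
  assumes fin: "finite S" and M: "M \<in> S"
  shows "(\<Sum>\<sigma>\<in>permutations_of_set S. h \<sigma>) =
    (\<Sum>T\<in>Pow (S - {M}). \<Sum>w1\<in>permutations_of_set T. \<Sum>w2\<in>permutations_of_set (S - {M} - T). h (w1 @ M # w2))"
proof -
  let ?S' = "S - {M}"
  define Z where "Z = Sigma (Pow ?S') (\<lambda>T. permutations_of_set T \<times> permutations_of_set (?S' - T))"
  define j where "j = (\<lambda>(T::nat set, w1::nat list, w2::nat list). w1 @ M # w2)"
  have finZ: "finite Z" unfolding Z_def using fin by (intro finite_SigmaI) auto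
  have RHS: "(\<Sum>T\<in>Pow ?S'. \<Sum>w1\<in>permutations_of_set T. \<Sum>w2\<in>permutations_of_set (?S' - T). h (w1 @ M # w2))
      = (\<Sum>z\<in>Z. h (j z))"
  proof -
    have "(\<Sum>z\<in>Z. h (j z)) = (\<Sum>T\<in>Pow ?S'. \<Sum>p\<in>permutations_of_set T \<times> permutations_of_set (?S' - T). h (j (T, p)))"
      unfolding Z_def by (subst sum.Sigma) (auto simp: fin case_prod_unfold)
    also have "\<dots> = (\<Sum>T\<in>Pow ?S'. \<Sum>w1\<in>permutations_of_set T. \<Sum>w2\<in>permutations_of_set (?S' - T). h (w1 @ M # w2))"
      by (simp add: sum.cartesian_product j_def case_prod_unfold)
    finally show ?thesis by simp
  qed
  have inj: "inj_on j Z"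
  proof (rule inj_onI)
    fix z z' assume z: "z \<in> Z" "z' \<in> Z" and e: "j z = j z'"
    obtain T w1 w2 where zz: "z = (T, w1, w2)" by (cases z) auto
    obtain T' w1' w2' where zz': "z' = (T', w1', w2')" by (cases z') auto
    have "M \<notin> set w1" "M \<notin> set w2" "set w1 = T" "set w1' = T'"
      using z zz zz' by (auto simp: Z_def permutations_of_set_def)
    moreover have "w1 @ M # w2 = w1' @ M # w2'" using e zz zz' by (simp add: j_def)
    ultimately have "w1 = w1' \<and> w2 = w2'" using append_Cons_eq_iff[of M w1 w2 w1' w2'] by simp
    then show "z = z'" using zz zz' \<open>set w1 = T\<close> \<open>set w1' = T'\<close> by simp
  qed
  have img: "j ` Z = permutations_of_set S"
  proof (intro set_eqI iffI)
    fix s assume "s \<in> j ` Z"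
    then obtain T w1 w2 where "T \<subseteq> ?S'" "w1 \<in> permutations_of_set T" "w2 \<in> permutations_of_set (?S' - T)"
      "s = w1 @ M # w2" by (auto simp: Z_def j_def)
    then show "s \<in> permutations_of_set S" using M
      by (auto simp: permutations_of_set_def)
  next
    fix s assume s: "s \<in> permutations_of_set S"
    then have "M \<in> set s" using M by (auto simp: permutations_of_set_def)
    then obtain w1 w2 where sw: "s = w1 @ M # w2" by (meson split_list)
    have d: "distinct (w1 @ M # w2)" "set (w1 @ M # w2) = S" using s sw by (auto simp: permutations_of_set_def)
    have "(set w1, w1, w2) \<in> Z" unfolding Z_def using d
      by (auto simp: permutations_of_set_def)
    then show "s \<in> j ` Z" using sw by (force simp: j_def)
  qed
  show ?thesis unfolding RHS img[symmetric] using sum.reindex[OF inj, of h] by simp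
qed

lemma relabel:
  fixes h :: "nat list \<Rightarrow> 'a::comm_monoid_add"
  assumes fin: "finite T"
    and inv: "\<And>w f. w \<in> permutations_of_set {1..card T} \<Longrightarrow>
       (\<And>x y. x \<in> set w \<Longrightarrow> y \<in> set w \<Longrightarrow> (f x < f y) = (x < y)) \<Longrightarrow> h (map f w) = h w"
  shows "(\<Sum>w\<in>permutations_of_set T. h w) = (\<Sum>w\<in>permutations_of_set {1..card T}. h w)"
proof -
  define xs where "xs = sorted_list_of_set T"
  define k where "k = card T"
  define f where "f = (\<lambda>i. xs ! (i - 1))"
  have sw: "sorted_wrt (<) xs" and lx: "length xs = k" and sx: "set xs = T"
    using fin by (auto simp: xs_def k_def strict_sorted_list_of_set)
  have ord: "(f x < f y) = (x < y)" if "x \<in> {1..k}" "y \<in> {1..k}" for x y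
  proof -
    have A: "f x < f y" if "x < y" "x \<in> {1..k}" "y \<in> {1..k}" for x y
      using sorted_wrt_nth_less[OF sw, of "x-1" "y-1"] that lx by (auto simp: f_def)
    show ?thesis using A[of x y] A[of y x] that by (cases "x < y"; cases "y < x") auto
  qed
  have injf: "inj_on f {1..k}"
  proof (rule inj_onI)
    fix x y assume "x \<in> {1..k}" "y \<in> {1..k}" "f x = f y"
    then show "x = y" using ord by (metis less_irrefl linorder_neqE_nat)
  qed
  have imf: "f ` {1..k} = T"
  proof -
    have "f ` {1..k} = (\<lambda>i. xs ! i) ` {0..<k}"
    proof (intro set_eqI iffI)
      fix z assume "z \<in> f ` {1..k}" then show "z \<in> (\<lambda>i. xs ! i) ` {0..<k}"
        by (auto simp: f_def intro!: image_eqI)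
    next
      fix z assume "z \<in> (\<lambda>i. xs ! i) ` {0..<k}"
      then obtain i where "i < k" "z = xs ! i" by auto
      then show "z \<in> f ` {1..k}" by (auto simp: f_def intro!: image_eqI[where x="Suc i"])
    qed
    also have "\<dots> = set xs" using lx by (auto simp: set_conv_nth)
    finally show ?thesis using sx by simp
  qed
  have P: "permutations_of_set T = map f ` permutations_of_set {1..k}"
    using permutations_of_set_image_inj[OF injf] imf by simp
  have injm: "inj_on (map f) (permutations_of_set {1..k})"
    by (rule inj_on_mapI) (use injf in \<open>auto simp: permutations_of_set_def\<close>)
  have "(\<Sum>w\<in>permutations_of_set T. h w) = (\<Sum>w\<in>permutations_of_set {1..k}. h (map f w))"
    unfolding P sum.reindex[OF injm] comp_def ..
  also have "\<dots> = (\<Sum>w\<in>permutations_of_set {1..k}. h w)"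
  proof (rule sum.cong[OF refl])
    fix w assume w: "w \<in> permutations_of_set {1..k}"
    then have "set w = {1..k}" by (simp add: permutations_of_set_def)
    then show "h (map f w) = h w" using inv[of w f] w ord unfolding k_def by auto
  qed
  finally show ?thesis by (simp add: k_def)
qed

lemma sum_pow_card:
  fixes \<phi> :: "nat \<Rightarrow> 'a::comm_semiring_1"
  assumes fin: "finite A"
  shows "(\<Sum>T\<in>Pow A. \<phi> (card T)) = (\<Sum>k=0..card A. of_nat (card A choose k) * \<phi> k)"
proof -
  have "(\<Sum>T\<in>Pow A. \<phi> (card T)) = (\<Sum>k\<in>{0..card A}. \<Sum>T\<in>{T \<in> Pow A. card T = k}. \<phi> (card T))"
    by (rule sum.group[symmetric]) (use fin in \<open>auto intro: card_mono\<close>)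
  also have "\<dots> = (\<Sum>k\<in>{0..card A}. of_nat (card A choose k) * \<phi> k)"
  proof (rule sum.cong[OF refl])
    fix k
    have "(\<Sum>T\<in>{T \<in> Pow A. card T = k}. \<phi> (card T)) = (\<Sum>T\<in>{T \<in> Pow A. card T = k}. \<phi> k)"
      by (rule sum.cong) auto
    also have "\<dots> = of_nat (card {T \<in> Pow A. card T = k}) * \<phi> k" by simp
    also have "{T \<in> Pow A. card T = k} = {T. T \<subseteq> A \<and> card T = k}" by auto
    finally show "(\<Sum>T\<in>{T \<in> Pow A. card T = k}. \<phi> (card T)) = of_nat (card A choose k) * \<phi> k"
      using n_subsets[OF fin, of k] by simp
  qed
  finally show ?thesis .
qed



lemma GEN:
  fixes \<Phi> H1 H2 :: "nat list \<Rightarrow> 'a::comm_ring_1" and K :: "bool \<Rightarrow> bool \<Rightarrow> 'a"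
  assumes inv1: "\<And>w f k. w \<in> permutations_of_set {1..k} \<Longrightarrow>
       (\<And>x y. x \<in> set w \<Longrightarrow> y \<in> set w \<Longrightarrow> (f x < f y) = (x < y)) \<Longrightarrow> H1 (map f w) = H1 w"
    and inv2: "\<And>w f k. w \<in> permutations_of_set {1..k} \<Longrightarrow>
       (\<And>x y. x \<in> set w \<Longrightarrow> y \<in> set w \<Longrightarrow> (f x < f y) = (x < y)) \<Longrightarrow> H2 (map f w) = H2 w"
    and dec: "\<And>w1 w2. distinct (w1 @ Suc n # w2) \<Longrightarrow> set (w1 @ Suc n # w2) = {1..Suc n} \<Longrightarrow>
       \<Phi> (w1 @ Suc n # w2) = H1 w1 * K (w1 = []) (w2 = []) * H2 w2"
  shows "(\<Sum>\<sigma>\<in>permutations_of_set {1..Suc n}. \<Phi> \<sigma>) =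
    (\<Sum>k=0..n. of_nat (n choose k) * ((\<Sum>w\<in>permutations_of_set {1..k}. H1 w) * K (k = 0) (n - k = 0) *
        (\<Sum>w\<in>permutations_of_set {1..n-k}. H2 w)))"
proof -
  define \<phi> where "\<phi> = (\<lambda>k. (\<Sum>w\<in>permutations_of_set {1..k}. H1 w) * K (k = 0) (n - k = 0) *
        (\<Sum>w\<in>permutations_of_set {1..n-k}. H2 w))"
  have S': "{1..Suc n} - {Suc n} = {1..n}" by auto
  have "(\<Sum>\<sigma>\<in>permutations_of_set {1..Suc n}. \<Phi> \<sigma>) =
    (\<Sum>T\<in>Pow {1..n}. \<Sum>w1\<in>permutations_of_set T. \<Sum>w2\<in>permutations_of_set ({1..n} - T). \<Phi> (w1 @ Suc n # w2))"
    using perm_decomp[of "{1..Suc n}" "Suc n" \<Phi>] S' by simp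
  also have "\<dots> = (\<Sum>T\<in>Pow {1..n}. \<phi> (card T))"
  proof (rule sum.cong[OF refl])
    fix T assume T: "T \<in> Pow {1..n}"
    have finT: "finite T" using T finite_subset by auto
    have cT: "card T \<le> n" using T by (metis PowD card_atLeastAtMost card_mono diff_Suc_1 finite_atLeastAtMost)
    have cD: "card ({1..n} - T) = n - card T" using T finT by (auto simp: card_Diff_subset)
    have e1: "(T = {}) = (card T = 0)" using finT by auto
    have e2: "({1..n} - T = {}) = (n - card T = 0)" using cD by (metis card_0_eq finite_Diff finite_atLeastAtMost)
    have "(\<Sum>w1\<in>permutations_of_set T. \<Sum>w2\<in>permutations_of_set ({1..n} - T). \<Phi> (w1 @ Suc n # w2)) =
       (\<Sum>w1\<in>permutations_of_set T. \<Sum>w2\<in>permutations_of_set ({1..n} - T). H1 w1 * K (T = {}) ({1..n} - T = {}) * H2 w2)"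
    proof (intro sum.cong refl)
      fix w1 w2 assume w1: "w1 \<in> permutations_of_set T" and w2: "w2 \<in> permutations_of_set ({1..n} - T)"
      have sw: "set w1 = T" "set w2 = {1..n} - T" "distinct w1" "distinct w2"
        using w1 w2 by (auto simp: permutations_of_set_def)
      have D: "distinct (w1 @ Suc n # w2)" "set (w1 @ Suc n # w2) = {1..Suc n}" using sw T by auto
      have E: "(w2 = []) = ({1..n} - T = {})" "(w1 = []) = (T = {})"
        using sw by (metis set_empty)+
      show "\<Phi> (w1 @ Suc n # w2) = H1 w1 * K (T = {}) ({1..n} - T = {}) * H2 w2"
        using dec[OF D] unfolding E .
    qed
    also have "\<dots> = (\<Sum>w1\<in>permutations_of_set T. H1 w1) * K (T = {}) ({1..n} - T = {}) *
         (\<Sum>w2\<in>permutations_of_set ({1..n} - T). H2 w2)"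
      by (simp only: sum_distrib_left[symmetric] sum_distrib_right[symmetric])
    also have "(\<Sum>w1\<in>permutations_of_set T. H1 w1) = (\<Sum>w\<in>permutations_of_set {1..card T}. H1 w)"
      by (rule relabel[OF finT]) (rule inv1)
    also have "(\<Sum>w2\<in>permutations_of_set ({1..n} - T). H2 w2) = (\<Sum>w\<in>permutations_of_set {1..card ({1..n} - T)}. H2 w)"
      by (rule relabel) (auto intro: inv2)
    finally show "(\<Sum>w1\<in>permutations_of_set T. \<Sum>w2\<in>permutations_of_set ({1..n} - T). \<Phi> (w1 @ Suc n # w2)) = \<phi> (card T)"
      unfolding \<phi>_def e1 e2 cD .
  qed
  also have "\<dots> = (\<Sum>k=0..n. of_nat (n choose k) * \<phi> k)"
    using sum_pow_card[of "{1..n}" \<phi>] by simp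
  finally show ?thesis unfolding \<phi>_def .
qed



definition aseq :: "'a::comm_ring_1 \<Rightarrow> 'a \<Rightarrow> 'a \<Rightarrow> 'a \<Rightarrow> 'a \<Rightarrow> nat \<Rightarrow> 'a" where
  "aseq al u1 u2 u3 u4 n = (\<Sum>w\<in>permutations_of_set {1..n}. al ^ LRmax w * wt u1 u2 u3 u4 (tp False True w))"
definition bseq :: "'a::comm_ring_1 \<Rightarrow> 'a \<Rightarrow> 'a \<Rightarrow> 'a \<Rightarrow> 'a \<Rightarrow> nat \<Rightarrow> 'a" where
  "bseq be u1 u2 u3 u4 n = (\<Sum>w\<in>permutations_of_set {1..n}. be ^ RLmax w * wt u1 u2 u3 u4 (tp True False w))"
definition gseq :: "'a::comm_ring_1 \<Rightarrow> 'a \<Rightarrow> 'a \<Rightarrow> 'a \<Rightarrow> nat \<Rightarrow> 'a" where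
  "gseq u1 u2 u3 u4 n = (\<Sum>w\<in>permutations_of_set {1..n}. wt u1 u2 u3 u4 (tp True True w))"

lemma seq0: "aseq al u1 u2 u3 u4 0 = 1" "bseq be u1 u2 u3 u4 0 = 1" "gseq u1 u2 u3 u4 0 = 1"
  by (simp_all add: aseq_def bseq_def gseq_def LRmax_def RLmax_def)

lemma split_facts:
  assumes "distinct (w1 @ Suc n # w2)" "set (w1 @ Suc n # w2) = {1..Suc n}"
  shows "\<forall>z\<in>set w1. z < Suc n" "\<forall>z\<in>set w2. z < Suc n" "0 \<notin> set (w1 @ Suc n # w2)"
proof -
  have "set w1 \<subseteq> {1..Suc n}" "set w2 \<subseteq> {1..Suc n}" "Suc n \<notin> set w1" "Suc n \<notin> set w2"
    using assms by auto
  then show "\<forall>z\<in>set w1. z < Suc n" "\<forall>z\<in>set w2. z < Suc n" by (auto simp: subset_iff le_less)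
  show "0 \<notin> set (w1 @ Suc n # w2)" using assms(2) by auto
qed

lemma R1:
  "P_poly n u1 u2 u3 u4 al be = (\<Sum>k=0..n. of_nat (n choose k) *
     (aseq al u1 u2 u3 u4 k * 1 * bseq be u1 u2 u3 u4 (n - k)))"
proof -
  have "P_poly n u1 u2 u3 u4 al be = (\<Sum>s\<in>permutations_of_set {1..Suc n}.
        u1 ^ valleys s * u2 ^ (ext_peaks s - 1) * u3 ^ rdd s * u4 ^ lda s *
        al ^ (LRmax s - 1) * be ^ (RLmax s - 1))" by (simp add: P_poly_def)
  also have "\<dots> = (\<Sum>k=0..n. of_nat (n choose k) *
     (aseq al u1 u2 u3 u4 k * 1 * bseq be u1 u2 u3 u4 (n - k)))"
    unfolding aseq_def bseq_def
  proof (rule GEN)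
    fix w :: "nat list" and f :: "nat \<Rightarrow> nat" and k :: nat
    assume "\<And>x y. x \<in> set w \<Longrightarrow> y \<in> set w \<Longrightarrow> (f x < f y) = (x < y)"
    then show "al ^ LRmax (map f w) * wt u1 u2 u3 u4 (tp False True (map f w)) =
        al ^ LRmax w * wt u1 u2 u3 u4 (tp False True w)"
      "be ^ RLmax (map f w) * wt u1 u2 u3 u4 (tp True False (map f w)) =
        be ^ RLmax w * wt u1 u2 u3 u4 (tp True False w)"
      by (simp_all add: LR_map RL_map tp_map)
  next
    fix w1 w2 assume D: "distinct (w1 @ Suc n # w2)" "set (w1 @ Suc n # w2) = {1..Suc n}"
    note F = split_facts[OF D]
    have tp: "tp False False (w1 @ Suc n # w2) = tp False True w1 @ [2] @ tp True False w2"
      using tp_split[OF F(1,2), of False False] by (simp add: code_def)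
    note st = stats_tp[OF D(1) F(3)]
    show "u1 ^ valleys (w1 @ Suc n # w2) * u2 ^ (ext_peaks (w1 @ Suc n # w2) - 1) *
        u3 ^ rdd (w1 @ Suc n # w2) * u4 ^ lda (w1 @ Suc n # w2) *
        al ^ (LRmax (w1 @ Suc n # w2) - 1) * be ^ (RLmax (w1 @ Suc n # w2) - 1) =
        al ^ LRmax w1 * wt u1 u2 u3 u4 (tp False True w1) * 1 * (be ^ RLmax w2 * wt u1 u2 u3 u4 (tp True False w2))"
      unfolding st tp using LR_split[OF F(1,2)] RL_split[OF F(1,2)]
      by (simp add: wt_def count_list_append power_add algebra_simps)
  qed
  finally show ?thesis .
qed

lemma R2:
  "aseq al u1 u2 u3 u4 (Suc n) = (\<Sum>k=0..n. of_nat (n choose k) *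
     (aseq al u1 u2 u3 u4 k * (al * (if n - k = 0 then u4 else u2)) * gseq u1 u2 u3 u4 (n - k)))"
  unfolding aseq_def gseq_def
proof (rule GEN[where K = "\<lambda>b1 b2. al * (if b2 then u4 else u2)"])
  fix w :: "nat list" and f :: "nat \<Rightarrow> nat" and k :: nat
  assume "\<And>x y. x \<in> set w \<Longrightarrow> y \<in> set w \<Longrightarrow> (f x < f y) = (x < y)"
  then show "al ^ LRmax (map f w) * wt u1 u2 u3 u4 (tp False True (map f w)) =
      al ^ LRmax w * wt u1 u2 u3 u4 (tp False True w)"
    "wt u1 u2 u3 u4 (tp True True (map f w)) = wt u1 u2 u3 u4 (tp True True w)"
    by (simp_all add: LR_map tp_map)
next
  fix w1 w2 assume D: "distinct (w1 @ Suc n # w2)" "set (w1 @ Suc n # w2) = {1..Suc n}"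
  note F = split_facts[OF D]
  have tp: "tp False True (w1 @ Suc n # w2) = tp False True w1 @ [code False (w2 = [])] @ tp True True w2"
    using tp_split[OF F(1,2), of False True] by simp
  show "al ^ LRmax (w1 @ Suc n # w2) * wt u1 u2 u3 u4 (tp False True (w1 @ Suc n # w2)) =
      al ^ LRmax w1 * wt u1 u2 u3 u4 (tp False True w1) * (al * (if w2 = [] then u4 else u2)) *
      wt u1 u2 u3 u4 (tp True True w2)"
    unfolding tp wt_append wt_code using LR_split[OF F(1,2)] by (simp add: algebra_simps)
qed

lemma R3:
  "bseq be u1 u2 u3 u4 (Suc n) = (\<Sum>k=0..n. of_nat (n choose k) *
     (gseq u1 u2 u3 u4 k * (be * (if k = 0 then u3 else u2)) * bseq be u1 u2 u3 u4 (n - k)))"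
  unfolding bseq_def gseq_def
proof (rule GEN[where K = "\<lambda>b1 b2. be * (if b1 then u3 else u2)"])
  fix w :: "nat list" and f :: "nat \<Rightarrow> nat" and k :: nat
  assume "\<And>x y. x \<in> set w \<Longrightarrow> y \<in> set w \<Longrightarrow> (f x < f y) = (x < y)"
  then show "be ^ RLmax (map f w) * wt u1 u2 u3 u4 (tp True False (map f w)) =
      be ^ RLmax w * wt u1 u2 u3 u4 (tp True False w)"
    "wt u1 u2 u3 u4 (tp True True (map f w)) = wt u1 u2 u3 u4 (tp True True w)"
    by (simp_all add: RL_map tp_map)
next
  fix w1 w2 assume D: "distinct (w1 @ Suc n # w2)" "set (w1 @ Suc n # w2) = {1..Suc n}"
  note F = split_facts[OF D]
  have tp: "tp True False (w1 @ Suc n # w2) = tp True True w1 @ [code (w1 = []) False] @ tp True False w2"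
    using tp_split[OF F(1,2), of True False] by simp
  show "be ^ RLmax (w1 @ Suc n # w2) * wt u1 u2 u3 u4 (tp True False (w1 @ Suc n # w2)) =
      wt u1 u2 u3 u4 (tp True True w1) * (be * (if w1 = [] then u3 else u2)) *
      (be ^ RLmax w2 * wt u1 u2 u3 u4 (tp True False w2))"
    unfolding tp wt_append wt_code using RL_split[OF F(1,2)] by (simp add: algebra_simps)
qed

lemma R4:
  "gseq u1 u2 u3 u4 (Suc n) = (\<Sum>k=0..n. of_nat (n choose k) *
     (gseq u1 u2 u3 u4 k * wt u1 u2 u3 u4 [code (k = 0) (n - k = 0)] * gseq u1 u2 u3 u4 (n - k)))"
  unfolding gseq_def
proof (rule GEN[where K = "\<lambda>b1 b2. wt u1 u2 u3 u4 [code b1 b2]"])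
  fix w :: "nat list" and f :: "nat \<Rightarrow> nat" and k :: nat
  assume "\<And>x y. x \<in> set w \<Longrightarrow> y \<in> set w \<Longrightarrow> (f x < f y) = (x < y)"
  then show "wt u1 u2 u3 u4 (tp True True (map f w)) = wt u1 u2 u3 u4 (tp True True w)"
    "wt u1 u2 u3 u4 (tp True True (map f w)) = wt u1 u2 u3 u4 (tp True True w)"
    by (simp_all add: tp_map)
next
  fix w1 w2 assume D: "distinct (w1 @ Suc n # w2)" "set (w1 @ Suc n # w2) = {1..Suc n}"
  note F = split_facts[OF D]
  have tp: "tp True True (w1 @ Suc n # w2) = tp True True w1 @ [code (w1 = []) (w2 = [])] @ tp True True w2"
    using tp_split[OF F(1,2), of True True] by simp
  show "wt u1 u2 u3 u4 (tp True True (w1 @ Suc n # w2)) =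
      wt u1 u2 u3 u4 (tp True True w1) * wt u1 u2 u3 u4 [code (w1 = []) (w2 = [])] *
      wt u1 u2 u3 u4 (tp True True w2)"
    unfolding tp wt_append by (simp add: algebra_simps)
qed




definition egf :: "(nat \<Rightarrow> 'a::field_char_0) \<Rightarrow> 'a fps" where
  "egf x = Abs_fps (\<lambda>n. x n / fact n)"

definition conv :: "(nat \<Rightarrow> 'a::comm_ring_1) \<Rightarrow> (nat \<Rightarrow> 'a) \<Rightarrow> nat \<Rightarrow> 'a" where
  "conv x y n = (\<Sum>k=0..n. of_nat (n choose k) * x k * y (n - k))"

lemma egf_mult: "egf x * egf y = egf (conv x y)"
proof (rule fps_ext)
  fix n
  have "(egf x * egf y) $ n = (\<Sum>k=0..n. x k / fact k * (y (n - k) / fact (n - k)))"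
    by (simp add: egf_def fps_mult_nth)
  also have "\<dots> = (\<Sum>k=0..n. of_nat (n choose k) * x k * y (n - k) / fact n)"
  proof (rule sum.cong[OF refl])
    fix k assume "k \<in> {0..n}"
    then have kn: "k \<le> n" by simp
    have e: "of_nat (n choose k) = (fact n :: 'a) / (fact k * fact (n-k))" by (rule binomial_fact[OF kn])
    show "x k / fact k * (y (n - k) / fact (n - k)) = of_nat (n choose k) * x k * y (n - k) / fact n"
      unfolding e by (simp add: field_simps)
  qed
  also have "\<dots> = conv x y n / fact n" by (simp add: conv_def sum_divide_distrib)
  finally show "(egf x * egf y) $ n = egf (conv x y) $ n" by (simp add: egf_def)
qed

lemma egf_deriv: "fps_deriv (egf x) = egf (\<lambda>n. x (Suc n))"
proof (rule fps_ext)
  fix n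
  have "(fact (Suc n) :: 'a) = of_nat (Suc n) * fact n" by simp
  moreover have "(fact n :: 'a) \<noteq> 0" by simp
  ultimately show "fps_deriv (egf x) $ n = egf (\<lambda>n. x (Suc n)) $ n"
    by (simp add: egf_def field_simps del: fact_Suc of_nat_Suc)
qed

lemma egf_add: "egf (\<lambda>n. x n + y n) = egf x + egf y"
  by (rule fps_ext) (simp add: egf_def add_divide_distrib)

lemma egf_cmult: "egf (\<lambda>n. c * x n) = fps_const c * egf x"
  by (rule fps_ext) (simp add: egf_def)

lemma egf_delta: "egf (\<lambda>n. if n = 0 then 1 else 0) = 1"
  by (rule fps_ext) (simp add: egf_def)

lemma main_comb:
  fixes \<alpha> \<beta> u1 u2 u3 u4 :: "'a::field_char_0"
  defines "A \<equiv> egf (aseq \<alpha> u1 u2 u3 u4)" and "B \<equiv> egf (bseq \<beta> u1 u2 u3 u4)"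
    and "Gt \<equiv> egf (\<lambda>n. if n = 0 then 0 else gseq u1 u2 u3 u4 n)"
  shows "Abs_fps (\<lambda>n. P_poly n u1 u2 u3 u4 \<alpha> \<beta> / fact n) = A * B"
    "fps_deriv A = A * (fps_const \<alpha> * (fps_const u4 + fps_const u2 * Gt))" "A $ 0 = 1"
    "fps_deriv B = B * (fps_const \<beta> * (fps_const u3 + fps_const u2 * Gt))" "B $ 0 = 1"
    "fps_deriv Gt = fps_const u1 + (fps_const u3 + fps_const u4) * Gt + fps_const u2 * Gt^2" "Gt $ 0 = 0"
proof -
  let ?a = "aseq \<alpha> u1 u2 u3 u4" and ?b = "bseq \<beta> u1 u2 u3 u4" and ?g = "gseq u1 u2 u3 u4"
  define gt where "gt = (\<lambda>n. if n = 0 then 0 else ?g n)"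
  define d where "d = (\<lambda>n::nat. if n = 0 then 1 else (0::'a))"
  have Gt: "Gt = egf gt" unfolding Gt_def gt_def ..
  have "Abs_fps (\<lambda>n. P_poly n u1 u2 u3 u4 \<alpha> \<beta> / fact n) = egf (conv ?a ?b)"
    unfolding egf_def conv_def R1 by (simp add: mult.assoc)
  then show "Abs_fps (\<lambda>n. P_poly n u1 u2 u3 u4 \<alpha> \<beta> / fact n) = A * B"
    unfolding A_def B_def egf_mult .
  define c2 where "c2 = (\<lambda>m. \<alpha> * (if m = 0 then u4 else u2) * ?g m)"
  have "fps_deriv A = egf (conv ?a c2)" unfolding A_def egf_deriv conv_def c2_def R2
    by (simp add: mult.assoc)
  also have "egf c2 = fps_const \<alpha> * (fps_const u4 + fps_const u2 * Gt)"
    by (rule fps_ext) (simp add: c2_def Gt gt_def egf_def seq0 algebra_simps)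
  then have "egf (conv ?a c2) = A * (fps_const \<alpha> * (fps_const u4 + fps_const u2 * Gt))"
    unfolding A_def egf_mult[symmetric] by simp
  finally show "fps_deriv A = A * (fps_const \<alpha> * (fps_const u4 + fps_const u2 * Gt))" .
  show "A $ 0 = 1" "B $ 0 = 1" "Gt $ 0 = 0" by (simp_all add: A_def B_def Gt egf_def gt_def seq0)
  define c3 where "c3 = (\<lambda>m. ?g m * (\<beta> * (if m = 0 then u3 else u2)))"
  have "fps_deriv B = egf (conv c3 ?b)" unfolding B_def egf_deriv conv_def c3_def R3
    by (simp add: mult.assoc)
  also have "egf c3 = fps_const \<beta> * (fps_const u3 + fps_const u2 * Gt)"
    by (rule fps_ext) (simp add: c3_def Gt gt_def egf_def seq0 algebra_simps)
  then have "egf (conv c3 ?b) = B * (fps_const \<beta> * (fps_const u3 + fps_const u2 * Gt))"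
    unfolding B_def egf_mult[symmetric] by (simp add: mult.commute)
  finally show "fps_deriv B = B * (fps_const \<beta> * (fps_const u3 + fps_const u2 * Gt))" .
  have trm: "?g k * wt u1 u2 u3 u4 [code (k = 0) (n - k = 0)] * ?g (n - k) =
      u1 * (d k * d (n - k)) + u3 * (d k * gt (n - k)) + u4 * (gt k * d (n - k)) + u2 * (gt k * gt (n - k))"
    if "k \<le> n" for k n
    using that by (cases "k = 0"; cases "n - k = 0") (simp_all add: wt_code d_def gt_def seq0)
  have rec: "?g (Suc n) = u1 * conv d d n + u3 * conv d gt n + u4 * conv gt d n + u2 * conv gt gt n" for n
  proof -
    have "?g (Suc n) = (\<Sum>k=0..n. of_nat (n choose k) *
      (u1 * (d k * d (n - k)) + u3 * (d k * gt (n - k)) + u4 * (gt k * d (n - k)) + u2 * (gt k * gt (n - k))))"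
      unfolding R4 by (intro sum.cong refl, subst trm) auto
    also have "\<dots> = u1 * conv d d n + u3 * conv d gt n + u4 * conv gt d n + u2 * conv gt gt n"
      by (simp add: conv_def sum.distrib sum_distrib_left algebra_simps)
    finally show ?thesis .
  qed
  have "fps_deriv Gt = egf (\<lambda>n. ?g (Suc n))" unfolding Gt egf_deriv gt_def by simp
  also have "\<dots> = egf (\<lambda>n. u1 * conv d d n + u3 * conv d gt n + u4 * conv gt d n + u2 * conv gt gt n)"
    unfolding rec ..
  also have "\<dots> = fps_const u1 * (egf d * egf d) + fps_const u3 * (egf d * egf gt) +
      fps_const u4 * (egf gt * egf d) + fps_const u2 * (egf gt * egf gt)"
    unfolding egf_add egf_cmult egf_mult ..
  also have "\<dots> = fps_const u1 + (fps_const u3 + fps_const u4) * Gt + fps_const u2 * Gt^2"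
    unfolding Gt d_def egf_delta by (simp add: algebra_simps power2_eq_square del: fcs)
  finally show "fps_deriv Gt = fps_const u1 + (fps_const u3 + fps_const u4) * Gt + fps_const u2 * Gt^2" .
qed

theorem theorem1p4:
  fixes \<alpha> \<beta> u1 u2 u3 u4 x y :: "'a::field_char_0"
  assumes "x + y = u3 + u4" and "x * y = u1 * u2" and "x \<noteq> y"
  shows "Abs_fps (\<lambda>n. P_poly n u1 u2 u3 u4 \<alpha> \<beta> / fact n) =
    fps_powr (1 + fps_const y * F_fps x y) ((\<alpha> + \<beta>) / 2) *
    fps_powr (1 + fps_const x * F_fps x y) ((\<alpha> + \<beta>) / 2) *
    fps_exp ((\<beta> - \<alpha>) * (u3 - u4) / 2)"
  by (subst main_comb(1)) (rule analytic_main[OF assms main_comb(2-7)])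


end
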